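(* Let $K=2^m$ with $m\in\mathbb{N}$, let $\gamma,\delta>0$, and let $a\in\mathbb{R}^{K-1}$ have $a_i=\gamma$ for odd $i$ and $a_i=\delta$ for even $i$ ($i=1,\dots,K-1$), so $\gamma$ appears $K/2$ times and $\delta$ appears $K/2-1$ times. Then $$\big(\Psi e^{-\Psi a}\big)_i=\begin{cases}2e^{-K\gamma}+(K-2)e^{-\frac K2(\gamma+\delta)}, & i\text{ odd},\\ Ke^{-\frac K2(\gamma+\delta)}, & i\text{ even},\end{cases}$$ where the exponential $e^{-\Psi a}$ is taken entrywise.
   Context: Sylvester Hadamard matrices: $\Phi_1=(1)$, $\Phi_{2^m}=\begin{bmatrix}\Phi_{2^{m-1}}&\Phi_{2^{m-1}}\\ \Phi_{2^{m-1}}&-\Phi_{2^{m-1}}\end{bmatrix}$, $\Phi=\Phi_K$. $\Psi\in\mathbb{R}^{(K-1)\times(K-1)}$ is obtained from $1_K1_K^T-\Phi$ by deleting its first row and first column, with rows/columns of $\Psi$ indexed $1,\dots,K-1$. *)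

theory Defs
  imports Complex_Main
begin

text \<open>Sylvester Hadamard matrix of order 2^m, as a function of 0-based indices
  i, j < 2^m, defined by the block recursion
  Phi_{2^(m+1)} = [[Phi, Phi], [Phi, -Phi]].\<close>
fun sylvester :: "nat \<Rightarrow> nat \<Rightarrow> nat \<Rightarrow> real" where
  "sylvester 0 i j = 1"
| "sylvester (Suc m) i j =
     (if i < 2^m \<and> j < 2^m then sylvester m i j
      else if i < 2^m then sylvester m i (j - 2^m)
      else if j < 2^m then sylvester m (i - 2^m) j
      else - sylvester m (i - 2^m) (j - 2^m))"

text \<open>Psi: the matrix 1 1^T - Phi with first row and column deleted. Rows/columns
  of Psi are indexed 1..K-1; Psi index i corresponds to the 0-based index i of Phi.\<close>
definition Psi :: "nat \<Rightarrow> nat \<Rightarrow> nat \<Rightarrow> real" where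
  "Psi m i j = 1 - sylvester m i j"

end

theory Submission imports Defs begin

lemma sum_split2: "(\<Sum>k<(n::nat)+n. f k) = (\<Sum>k<n. f k) + (\<Sum>k<n. f (k+n)::real)"
proof -
  have "(\<Sum>k<n+n. f k) = (\<Sum>k=0..<n+n. f k)" by (simp add: lessThan_atLeast0)
  also have "\<dots> = (\<Sum>k=0..<n. f k) + (\<Sum>k=n..<n+n. f k)"
    by (rule sum.atLeastLessThan_concat[symmetric]) auto
  also have "(\<Sum>k=n..<n+n. f k) = (\<Sum>k=0..<n. f (k+n))"
    using sum.shift_bounds_nat_ivl[of f 0 n n] by simp
  finally show ?thesis by (simp add: lessThan_atLeast0)
qed

lemma syl_sym: "sylvester m i j = sylvester m j i"
  by (induction m arbitrary: i j) auto

lemma syl_col0: "i < 2^m \<Longrightarrow> sylvester m i 0 = 1"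
  by (induction m arbitrary: i) auto

lemma syl_row0: "j < 2^m \<Longrightarrow> sylvester m 0 j = 1"
  using syl_col0[of j m] syl_sym[of m 0 j] by simp

lemma split_idx: "i < 2^Suc m \<Longrightarrow> \<exists>i'<2^m. i = i' \<or> i = i' + (2::nat)^m"
proof (cases "i < 2^m")
  case True then show ?thesis by blast
next
  case False
  assume "i < 2^Suc m"
  then have "i - 2^m < 2^m" "i = (i - 2^m) + 2^m" using False by auto
  then show ?thesis by blast
qed

lemma syl_LL: "i < 2^m \<Longrightarrow> j < 2^m \<Longrightarrow> sylvester (Suc m) i j = sylvester m i j" by simp
lemma syl_LH: "i < 2^m \<Longrightarrow> j < 2^m \<Longrightarrow> sylvester (Suc m) i (j + 2^m) = sylvester m i j" by simp
lemma syl_HL: "i < 2^m \<Longrightarrow> j < 2^m \<Longrightarrow> sylvester (Suc m) (i + 2^m) j = sylvester m i j" by simp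
lemma syl_HH: "i < 2^m \<Longrightarrow> j < 2^m \<Longrightarrow> sylvester (Suc m) (i + 2^m) (j + 2^m) = - sylvester m i j" by simp

lemma syl_col1: "m \<ge> 1 \<Longrightarrow> i < 2^m \<Longrightarrow> sylvester m i 1 = (if odd i then -1 else 1)"
proof (induction m arbitrary: i)
  case 0 then show ?case by simp
next
  case (Suc m)
  show ?case
  proof (cases "m = 0")
    case True
    then have "i = 0 \<or> i = 1" using Suc.prems by auto
    moreover have "sylvester 1 0 1 = 1" by (simp add: sylvester.simps)
    moreover have "sylvester 1 1 1 = -1" by (simp add: sylvester.simps)
    ultimately show ?thesis using True by auto
  next
    case False
    then have m1: "m \<ge> 1" by simp
    have ev: "even ((2::nat)^m)" using False by simp
    have one: "1 < (2::nat)^m" using power_strict_increasing[of 0 m "2::nat"] False by simp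
    obtain i' where i': "i' < 2^m" "i = i' \<or> i = i' + 2^m"
      using Suc.prems(2) using split_idx by blast
    have par: "odd i = odd i'" using i'(2) ev by auto
    have "sylvester (Suc m) i 1 = sylvester m i' 1"
      using i' one syl_LL[of i' m 1] syl_HL[of i' m 1] by auto
    then show ?thesis using Suc.IH[OF m1 i'(1)] par by simp
  qed
qed

lemma syl_row1: "m \<ge> 1 \<Longrightarrow> k < 2^m \<Longrightarrow> sylvester m 1 k = (if odd k then -1 else 1)"
  using syl_col1[of m k] syl_sym[of m 1 k] by simp

declare sylvester.simps(2)[simp del]

lemma ortho: "i < 2^m \<Longrightarrow> j < 2^m \<Longrightarrow>
  (\<Sum>k<2^m. sylvester m i k * sylvester m j k) = (if i = j then 2^m else 0)"
proof (induction m arbitrary: i j)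
  case 0 then show ?case by (simp add: lessThan_def)
next
  case (Suc m)
  let ?n = "(2::nat)^m"
  have split: "(\<Sum>k<2^Suc m. sylvester (Suc m) i k * sylvester (Suc m) j k)
     = (\<Sum>k<?n. sylvester (Suc m) i k * sylvester (Suc m) j k)
     + (\<Sum>k<?n. sylvester (Suc m) i (k + ?n) * sylvester (Suc m) j (k + ?n))"
    using sum_split2[where n="?n" and f="\<lambda>k. sylvester (Suc m) i k * sylvester (Suc m) j k"]
    by (simp only: power_Suc mult_2)
  obtain i' where i': "i' < ?n" "i = i' \<or> i = i' + ?n"
    using Suc.prems(1) split_idx by blast
  obtain j' where j': "j' < ?n" "j = j' \<or> j = j' + ?n"
    using Suc.prems(2) split_idx by blast
  define si :: real where "si = (if i = i' then 1 else -1)"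
  define sj :: real where "sj = (if j = j' then 1 else -1)"
  have A: "\<And>k. k < ?n \<Longrightarrow> sylvester (Suc m) i k = sylvester m i' k"
    using i' syl_LL syl_HL by metis
  have B: "\<And>k. k < ?n \<Longrightarrow> sylvester (Suc m) j k = sylvester m j' k"
    using j' syl_LL syl_HL by metis
  have C: "\<And>k. k < ?n \<Longrightarrow> sylvester (Suc m) i (k + ?n) = si * sylvester m i' k"
    using i' syl_LH syl_HH unfolding si_def by fastforce
  have D: "\<And>k. k < ?n \<Longrightarrow> sylvester (Suc m) j (k + ?n) = sj * sylvester m j' k"
    using j' syl_LH syl_HH unfolding sj_def by fastforce
  let ?S = "\<Sum>k<?n. sylvester m i' k * sylvester m j' k"
  have h1: "(\<Sum>k<?n. sylvester (Suc m) i k * sylvester (Suc m) j k) = ?S"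
    using A B by (intro sum.cong) auto
  have h2: "(\<Sum>k<?n. sylvester (Suc m) i (k + ?n) * sylvester (Suc m) j (k + ?n)) = si * sj * ?S"
    using C D by (auto simp: sum_distrib_left intro!: sum.cong)
  have IH: "?S = (if i' = j' then ?n else 0)"
    using Suc.IH[OF i'(1) j'(1)] by simp
  have ieq: "(i = j) = (i' = j' \<and> si = sj)"
    using i' j' unfolding si_def sj_def by auto
  have sq: "si * si = 1" unfolding si_def by simp
  show ?case
    unfolding split h1 h2 IH using ieq sq
    by (cases "i' = j'"; cases "si = sj"; auto simp: si_def sj_def split: if_splits)
qed


lemma sum_drop0: "(K::nat) \<ge> 1 \<Longrightarrow> (\<Sum>k<K. f k) = f 0 + (\<Sum>k=1..K-1. (f k::real))"
proof -
  assume "K \<ge> 1"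
  then have "{..<K} = insert 0 {1..K-1}" by auto
  then show ?thesis by simp
qed

lemma Psi_col0: "j < 2^m \<Longrightarrow> Psi m j 0 = 0"
  by (simp add: Psi_def syl_col0)

lemma inner:
  fixes c d :: real
  assumes m1: "m \<ge> 1" and j: "1 \<le> j" "j < 2^m"
    and a: "\<And>k. k < 2^m \<Longrightarrow> a k = c - d * sylvester m 1 k"
  shows "(\<Sum>k=1..2^m-1. Psi m j k * a k) = 2^m * c + (if j = 1 then 2^m * d else 0)"
proof -
  let ?K = "(2::nat)^m"
  let ?H = "sylvester m"
  have K1: "?K \<ge> 1" by simp
  have one: "1 < ?K" using power_strict_increasing[of 0 m "2::nat"] m1 by simp
  have "(\<Sum>k=1..?K-1. Psi m j k * a k) = (\<Sum>k<?K. Psi m j k * a k)"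
    using sum_drop0[OF K1, of "\<lambda>k. Psi m j k * a k"] Psi_col0[OF j(2)] by simp
  also have "\<dots> = (\<Sum>k<?K. c - d * ?H 1 k - c * ?H j k + d * (?H j k * ?H 1 k))"
  proof (intro sum.cong refl)
    fix k assume "k \<in> {..<?K}"
    then have "a k = c - d * ?H 1 k" using a by simp
    then show "Psi m j k * a k = c - d * ?H 1 k - c * ?H j k + d * (?H j k * ?H 1 k)"
      unfolding Psi_def by (simp only:) (simp add: algebra_simps)
  qed
  also have "\<dots> = ?K * c - d * (\<Sum>k<?K. ?H 1 k * ?H 0 k) - c * (\<Sum>k<?K. ?H j k * ?H 0 k)
      + d * (\<Sum>k<?K. ?H j k * ?H 1 k)"
    by (simp add: sum.distrib sum_subtractf sum_distrib_left syl_row0)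
  also have "\<dots> = ?K * c + (if j = 1 then ?K * d else 0)"
    using ortho[of 1 m 0] ortho[of j m 0] ortho[of j m 1] one j by simp
  finally show ?thesis by simp
qed

theorem lemmaD8:
  fixes m :: nat and \<gamma> \<delta> :: real and a :: "nat \<Rightarrow> real" and i :: nat
  defines "K \<equiv> (2::nat) ^ m"
  assumes "\<gamma> > 0" and "\<delta> > 0"
    and "\<And>k. a k = (if odd k then \<gamma> else \<delta>)"
    and "1 \<le> i" and "i \<le> K - 1"
  shows "(\<Sum>j = 1..K - 1. Psi m i j * exp (- (\<Sum>k = 1..K - 1. Psi m j k * a k))) =
    (if odd i then 2 * exp (- real K * \<gamma>) + (real K - 2) * exp (- (real K / 2) * (\<gamma> + \<delta>))
     else real K * exp (- (real K / 2) * (\<gamma> + \<delta>)))"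
proof -
  have K2: "K \<ge> 2" using assms(5,6) by simp
  have m1: "m \<ge> 1" using K2 unfolding K_def by (cases m) auto
  have iK: "i < 2^m" using assms(5,6) K_def by simp
  define c where "c = (\<gamma> + \<delta>) / 2"
  define d where "d = (\<gamma> - \<delta>) / 2"
  have a': "\<And>k. k < 2^m \<Longrightarrow> a k = c - d * sylvester m 1 k"
    using syl_row1[OF m1] assms(4) unfolding c_def d_def by (auto simp: field_simps)
  define X where "X = exp (- real K * \<gamma>)"
  define Y where "Y = exp (- (real K / 2) * (\<gamma> + \<delta>))"
  have E: "\<And>j. 1 \<le> j \<Longrightarrow> j \<le> K - 1 \<Longrightarrow>
      exp (- (\<Sum>k = 1..K - 1. Psi m j k * a k)) = (if j = 1 then X else Y)"
  proof -
    fix j assume j: "1 \<le> j" "j \<le> K - 1"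
    then have "j < 2^m" using K2 K_def by simp
    from inner[OF m1 j(1) this a'] have S: "(\<Sum>k = 1..K - 1. Psi m j k * a k) = K * c + (if j = 1 then K * d else 0)"
      unfolding K_def by simp
    show "exp (- (\<Sum>k = 1..K - 1. Psi m j k * a k)) = (if j = 1 then X else Y)"
    proof (cases "j = 1")
      case True
      have "K * c + K * d = K * \<gamma>" unfolding c_def d_def by (simp add: field_simps)
      then show ?thesis using S True unfolding X_def by simp
    next
      case False
      have "K * c = (real K / 2) * (\<gamma> + \<delta>)" unfolding c_def by simp
      then show ?thesis using S False unfolding Y_def by simp
    qed
  qed
  have "(\<Sum>j = 1..K - 1. Psi m i j * exp (- (\<Sum>k = 1..K - 1. Psi m j k * a k)))
      = (\<Sum>j = 1..K - 1. Psi m i j * Y + (if j = 1 then Psi m i 1 * (X - Y) else 0))"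
    using E by (intro sum.cong) (auto simp: algebra_simps)
  also have "\<dots> = Y * (\<Sum>j = 1..K - 1. Psi m i j) + Psi m i 1 * (X - Y)"
  proof -
    have "Suc 0 \<le> K - Suc 0" using K2 by simp
    then show ?thesis by (simp add: sum.distrib sum_distrib_left mult.commute)
  qed
  also have "(\<Sum>j = 1..K - 1. Psi m i j) = real K"
  proof -
    have K1: "K \<ge> 1" using K2 by simp
    have "(\<Sum>j = 1..K - 1. Psi m i j) = (\<Sum>j<K. Psi m i j)"
      using sum_drop0[OF K1, of "Psi m i"] Psi_col0[OF iK] by simp
    also have "\<dots> = (\<Sum>j<K. 1 - sylvester m i j * sylvester m 0 j)"
      unfolding K_def by (intro sum.cong) (auto simp: Psi_def syl_row0)
    also have "\<dots> = real K"
      using ortho[OF iK, of 0] assms(5) unfolding K_def by (simp add: sum_subtractf)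
    finally show ?thesis .
  qed
  also have "Psi m i 1 = (if odd i then 2 else 0)"
    using syl_col1[OF m1 iK] by (simp add: Psi_def)
  finally have F: "(\<Sum>j = 1..K - 1. Psi m i j * exp (- (\<Sum>k = 1..K - 1. Psi m j k * a k)))
     = Y * real K + (if odd i then 2 else 0) * (X - Y)" .
  show ?thesis
  proof (cases "odd i")
    case True
    have "Y * real K + 2 * (X - Y) = 2 * X + (real K - 2) * Y" by (simp add: algebra_simps)
    then show ?thesis using F True unfolding X_def Y_def by simp
  next
    case False
    then show ?thesis using F unfolding X_def Y_def by (simp add: mult.commute)
  qed
qed

end
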